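(* Let $(x,y)$ be a random pair with values in $\mathcal{X}\times\{-1,+1\}$ with distribution $P$. Let $\Theta=\{\theta^{(1)},\dots,\theta^{(m)}\}$ be a finite set of hyperparameter values and, for each $k\in[m]$, let $f_{\theta^{(k)}}:\mathcal{X}\times\mathbb{R}\to\mathbb{R}$ satisfy the scalable-classifier assumption. Fix $\varepsilon,\delta\in(0,1)$ and an integer $r\ge1$. Let $\mathcal{Z}_c$ be $n_c\ge r$ i.i.d. samples from $P$, and let $\{\tilde x^U_j\}_{j=1}^{n_U}$ be the feature vectors of all samples in $\mathcal{Z}_c$ with label $-1$. For each $k\in[m]$ and $j\in[n_U]$ let $\bar\rho^{(k)}_j$ be the unique real with $f_{\theta^{(k)}}(\tilde x^U_j,\bar\rho^{(k)}_j)=0$; when $n_U\ge r$ set $\rho^{(k)}_\varepsilon=\max^{(r)}(\{\bar\rho^{(k)}_j\}_{j=1}^{n_U})$ and $\mathcal{S}^{(k)}_\varepsilon=\{x\in\mathcal{X}: f_{\theta^{(k)}}(x,\rho^{(k)}_\varepsilon)<0\}$, and set $\mathcal{S}^{(k)}_\varepsilon=\mathcal{X}$ if $n_U<r$. Then for every $k\in[m]$, $$\Pr_{\mathcal{Z}_c}\Big\{\Pr_{(x,y)\sim P}\{y=-1\ \text{and}\ x\in\mathcal{S}^{(k)}_\varepsilon\}\le\varepsilon\Big\}\ge 1-m\,\mathbf{B}(r-1;n_c,\varepsilon),$$ where $(x,y)$ is independent of $\mathcal{Z}_c$.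
   Context: Scalable-classifier assumption for $f_\theta$: for every $x\in\mathcal{X}$, the map $\rho\mapsto f_\theta(x,\rho)$ is continuous and strictly increasing, and $\lim_{\rho\to-\infty}f_\theta(x,\rho)<0<\lim_{\rho\to+\infty}f_\theta(x,\rho)$. $[m]=\{1,\dots,m\}$. Binomial CDF: $\mathbf{B}(k;n,\varepsilon)=\sum_{i=0}^{k}\binom{n}{i}\varepsilon^i(1-\varepsilon)^{n-i}$. Generalized max: for a finite collection $\Gamma=\{\gamma_i\}_{i=1}^n$ of reals and integer $r\in\{1,\dots,n\}$, order it as $\gamma_{(1)}\ge\dots\ge\gamma_{(n)}$ and set $\max^{(r)}(\Gamma)=\gamma_{(r)}$. *)

theory Defs
  imports "HOL-Probability.Probability"
begin

definition scalable_classifier :: "'a set \<Rightarrow> ('a \<Rightarrow> real \<Rightarrow> real) \<Rightarrow> bool" where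
  "scalable_classifier X g \<longleftrightarrow>
     (\<forall>x\<in>X. continuous_on UNIV (g x) \<and> strict_mono (g x) \<and>
        (\<exists>a b :: ereal. ((\<lambda>\<rho>. ereal (g x \<rho>)) \<longlongrightarrow> a) at_bot \<and>
                        ((\<lambda>\<rho>. ereal (g x \<rho>)) \<longlongrightarrow> b) at_top \<and> a < 0 \<and> 0 < b))"

definition binom_cdf :: "nat \<Rightarrow> nat \<Rightarrow> real \<Rightarrow> real" where
  "binom_cdf k n \<epsilon> = (\<Sum>i=0..k. real (n choose i) * \<epsilon> ^ i * (1 - \<epsilon>) ^ (n - i))"

definition genmax :: "nat \<Rightarrow> real list \<Rightarrow> real" where
  "genmax r \<Gamma> = rev (sort \<Gamma>) ! (r - 1)"

definition rho_bar :: "('a \<Rightarrow> real \<Rightarrow> real) \<Rightarrow> 'a \<Rightarrow> real" where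
  "rho_bar g x = (THE \<rho>. g x \<rho> = 0)"

definition neg_features :: "nat \<Rightarrow> (nat \<Rightarrow> 'a \<times> int) \<Rightarrow> 'a list" where
  "neg_features nc z = [fst (z i). i \<leftarrow> [0..<nc], snd (z i) = -1]"

definition S_eps :: "'a set \<Rightarrow> ('a \<Rightarrow> real \<Rightarrow> real) \<Rightarrow> nat \<Rightarrow> nat \<Rightarrow> (nat \<Rightarrow> 'a \<times> int) \<Rightarrow> 'a set" where
  "S_eps X g r nc z =
     (let xs = neg_features nc z in
      if length xs < r then X
      else {x \<in> X. g x (genmax r (map (rho_bar g) xs)) < 0})"

end

theory Submission
  imports Defs
begin


lemma sum_subsets_card:
  fixes h :: "nat \<Rightarrow> real"
  shows "(\<Sum>J\<in>{J. J \<subseteq> {..<n} \<and> card J \<le> k}. h (card J)) = (\<Sum>j=0..k. real (n choose j) * h j)"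
proof -
  have fin: "finite {J. J \<subseteq> {..<n} \<and> card J \<le> k}" by simp
  have "(\<Sum>J\<in>{J. J \<subseteq> {..<n} \<and> card J \<le> k}. h (card J)) =
     (\<Sum>j\<in>{0..k}. \<Sum>J\<in>{J\<in>{J. J \<subseteq> {..<n} \<and> card J \<le> k}. card J = j}. h (card J))"
    by (rule sum.group[symmetric]) auto
  also have "\<dots> = (\<Sum>j=0..k. real (n choose j) * h j)"
  proof (rule sum.cong[OF refl])
    fix j assume "j \<in> {0..k}"
    then have eq: "{J\<in>{J. J \<subseteq> {..<n} \<and> card J \<le> k}. card J = j} = {J. J \<subseteq> {..<n} \<and> card J = j}" by auto
    show "(\<Sum>J\<in>{J\<in>{J. J \<subseteq> {..<n} \<and> card J \<le> k}. card J = j}. h (card J)) = real (n choose j) * h j"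
      unfolding eq using n_subsets[of "{..<n}" j] by simp
  qed
  finally show ?thesis .
qed

lemma count_measure:
  fixes P :: "'b measure" and C :: "'b set"
  assumes P: "prob_space P" and C: "C \<in> sets P"
  shows "{z \<in> space (PiM {..<n} (\<lambda>_. P)). card {i\<in>{..<n}. z i \<in> C} \<le> k} \<in> sets (PiM {..<n} (\<lambda>_. P)) \<and>
    measure (PiM {..<n} (\<lambda>_. P)) {z \<in> space (PiM {..<n} (\<lambda>_. P)). card {i\<in>{..<n}. z i \<in> C} \<le> k}
         = binom_cdf k n (measure P C)"
proof -
  interpret F: finite_product_prob_space "\<lambda>_. P" "{..<n}"
    by (simp add: finite_product_prob_space_def finite_product_sigma_finite_def product_sigma_finite_def
        product_prob_space_def product_prob_space_axioms_def finite_product_sigma_finite_axioms_def P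
        prob_space_imp_sigma_finite)
  interpret Q: prob_space P by (rule P)
  define B where "B J = PiE {..<n} (\<lambda>i. if i \<in> J then C else space P - C)" for J
  define S where "S = {J. J \<subseteq> {..<n} \<and> card J \<le> k}"
  have seteq: "{z \<in> space (PiM {..<n} (\<lambda>_. P)). card {i\<in>{..<n}. z i \<in> C} \<le> k} = (\<Union>J\<in>S. B J)"
  proof (rule set_eqI, rule iffI)
    fix z assume z: "z \<in> {z \<in> space (PiM {..<n} (\<lambda>_. P)). card {i\<in>{..<n}. z i \<in> C} \<le> k}"
    then have "z \<in> B {i\<in>{..<n}. z i \<in> C}" using sets.sets_into_space[OF C]
      by (auto simp: B_def space_PiM PiE_iff)
    moreover have "{i\<in>{..<n}. z i \<in> C} \<in> S" using z by (auto simp: S_def)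
    ultimately show "z \<in> (\<Union>J\<in>S. B J)" by blast
  next
    fix z assume "z \<in> (\<Union>J\<in>S. B J)"
    then obtain J where J: "J \<in> S" "z \<in> B J" by blast
    then have "{i\<in>{..<n}. z i \<in> C} = J" by (auto simp: B_def S_def PiE_iff split: if_splits)
    moreover have "z \<in> space (PiM {..<n} (\<lambda>_. P))" using J sets.sets_into_space[OF C]
      by (auto simp: B_def space_PiM PiE_iff split: if_splits)
    ultimately show "z \<in> {z \<in> space (PiM {..<n} (\<lambda>_. P)). card {i\<in>{..<n}. z i \<in> C} \<le> k}"
      using J by (auto simp: S_def)
  qed
  have Bsets: "B J \<in> sets (PiM {..<n} (\<lambda>_. P))" for J
    unfolding B_def by (rule sets_PiM_I_finite) (auto simp: C)
  have disj: "disjoint_family_on B S"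
    unfolding disjoint_family_on_def B_def S_def
    apply (auto simp: PiE_iff)
    apply (metis Diff_iff lessThan_iff subsetD)+
    done
  have mB: "measure (PiM {..<n} (\<lambda>_. P)) (B J) = measure P C ^ card J * (1 - measure P C) ^ (n - card J)"
    if "J \<in> S" for J
  proof -
    have "measure (PiM {..<n} (\<lambda>_. P)) (B J) = (\<Prod>i\<in>{..<n}. measure P (if i \<in> J then C else space P - C))"
      unfolding B_def by (rule F.finite_measure_PiM_emb) (auto simp: C)
    also have "\<dots> = (\<Prod>i\<in>{..<n}. (if i \<in> J then measure P C else 1 - measure P C))"
      by (rule prod.cong) (auto simp: prob_space.prob_compl[OF P] C)
    also have "\<dots> = measure P C ^ card J * (1 - measure P C) ^ (n - card J)"
    proof -
      have "J \<subseteq> {..<n}" using that by (auto simp: S_def)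
      then have "{..<n} \<inter> J = J" "card ({..<n} \<inter> - J) = n - card J"
        by (auto simp: card_Diff_subset finite_subset Diff_eq[symmetric])
      then show ?thesis by (simp add: prod.If_cases)
    qed
    finally show ?thesis .
  qed
  have "measure (PiM {..<n} (\<lambda>_. P)) (\<Union>J\<in>S. B J) = (\<Sum>J\<in>S. measure (PiM {..<n} (\<lambda>_. P)) (B J))"
    proof (rule measure_finite_Union[OF _ _ disj])
    show "finite S" by (simp add: S_def)
  qed (auto simp: Bsets F.emeasure_eq_measure)
  also have "\<dots> = (\<Sum>J\<in>S. measure P C ^ card J * (1 - measure P C) ^ (n - card J))"
    by (rule sum.cong) (auto simp: mB)
  also have "\<dots> = binom_cdf k n (measure P C)"
    unfolding S_def binom_cdf_def by (subst sum_subsets_card) (simp add: mult.assoc)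
  moreover have "(\<Union>J\<in>S. B J) \<in> sets (PiM {..<n} (\<lambda>_. P))"
    using Bsets by (auto simp: S_def)
  ultimately show ?thesis using seteq by simp
qed

lemma binom_cdf_mono:
  assumes "0 \<le> e" "e \<le> p" "p \<le> 1"
  shows "binom_cdf k n p \<le> binom_cdf k n e"
proof -
  define U where "U = uniform_measure lborel {0..1::real}"
  have U: "prob_space U" unfolding U_def by (rule prob_space_uniform_measure) auto
  have mU: "measure U {0..q} = q" if "0 \<le> q" "q \<le> 1" for q
  proof -
    have "measure U {0..q} = measure lborel ({0..1::real} \<inter> {0..q}) / measure lborel {0..1::real}"
      unfolding U_def by (rule measure_uniform_measure) auto
    also have "{0..1::real} \<inter> {0..q} = {0..q}" using that by auto
    finally show ?thesis using that by simp
  qed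
  have sU: "{0..q} \<in> sets U" for q :: real unfolding U_def by simp
  let ?M = "PiM {..<n} (\<lambda>_. U)"
  let ?A = "\<lambda>q. {z \<in> space ?M. card {i\<in>{..<n}. z i \<in> {0..q}} \<le> k}"
  have sub: "?A p \<subseteq> ?A e"
  proof
    fix z assume "z \<in> ?A p"
    moreover have "card {i\<in>{..<n}. z i \<in> {0..e}} \<le> card {i\<in>{..<n}. z i \<in> {0..p}}"
      by (rule card_mono) (use assms in auto)
    ultimately show "z \<in> ?A e" by auto
  qed
  interpret PU: prob_space ?M by (rule prob_space_PiM) (rule U)
  note cp = count_measure[OF U sU[of p], where n=n and k=k]
  note ce = count_measure[OF U sU[of e], where n=n and k=k]
  have "binom_cdf k n p = measure ?M (?A p)"
    using cp mU[of p] assms by (metis dual_order.trans)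
  also have "\<dots> \<le> measure ?M (?A e)"
    by (rule PU.finite_measure_mono[OF sub]) (use ce in blast)
  also have "\<dots> = binom_cdf k n e"
    using ce mU[of e] assms by (metis dual_order.trans)
  finally show ?thesis .
qed



lemma genmax_ge:
  assumes "1 \<le> r" "r \<le> length xs"
  shows "(t \<le> genmax r xs) \<longleftrightarrow> r \<le> length (filter (\<lambda>x. t \<le> x) xs)"
proof -
  define ys where "ys = rev (sort xs)"
  have len: "length ys = length xs" by (simp add: ys_def)
  have cnt: "length (filter (\<lambda>x. t \<le> x) ys) = length (filter (\<lambda>x. t \<le> x) xs)"
    unfolding ys_def by (metis length_rev mset_filter mset_sort rev_filter size_mset)
  have sw: "sorted_wrt (\<ge>) ys" unfolding ys_def by (simp add: sorted_wrt_rev)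
  have mono: "i \<le> j \<Longrightarrow> j < length ys \<Longrightarrow> ys ! j \<le> ys ! i" for i j
    using sw by (metis order.eq_iff le_neq_implies_less sorted_wrt_nth_less)
  have gm: "genmax r xs = ys ! (r - 1)" by (simp add: genmax_def ys_def)
  have c2: "length (filter (\<lambda>x. t \<le> x) ys) = card {i. i < length ys \<and> t \<le> ys ! i}"
    by (rule length_filter_conv_card)
  show ?thesis
  proof
    assume "t \<le> genmax r xs"
    then have ge: "t \<le> ys ! (r - 1)" using gm by simp
    have "{..<r} \<subseteq> {i. i < length ys \<and> t \<le> ys ! i}"
    proof
      fix i assume "i \<in> {..<r}"
      then have "i \<le> r - 1" "r - 1 < length ys" using assms len by auto
      then have "ys ! (r - 1) \<le> ys ! i" using mono by blast
      then show "i \<in> {i. i < length ys \<and> t \<le> ys ! i}" using ge \<open>i \<in> {..<r}\<close> assms len by auto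
    qed
    then have "r \<le> card {i. i < length ys \<and> t \<le> ys ! i}"
      by (metis card_lessThan card_mono finite_Collect_conjI finite_Collect_less_nat)
    then show "r \<le> length (filter (\<lambda>x. t \<le> x) xs)" using c2 cnt by simp
  next
    assume h: "r \<le> length (filter (\<lambda>x. t \<le> x) xs)"
    show "t \<le> genmax r xs"
    proof (rule ccontr)
      assume "\<not> t \<le> genmax r xs"
      then have lt: "ys ! (r - 1) < t" using gm by simp
      have "{i. i < length ys \<and> t \<le> ys ! i} \<subseteq> {..<r - 1}"
      proof
        fix i assume i: "i \<in> {i. i < length ys \<and> t \<le> ys ! i}"
        show "i \<in> {..<r - 1}"
        proof (rule ccontr)
          assume "i \<notin> {..<r - 1}"
          then have "r - 1 \<le> i" by simp
          then have "ys ! i \<le> ys ! (r - 1)" using mono[of "r - 1" i] i by simp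
          then show False using lt i by simp
        qed
      qed
      then have "card {i. i < length ys \<and> t \<le> ys ! i} \<le> r - 1"
        by (metis card_lessThan card_mono finite_lessThan)
      then show False using h c2 cnt assms by simp
    qed
  qed
qed

lemma rb_props:
  assumes "scalable_classifier X g" "x \<in> X"
  shows "g x (rho_bar g x) = 0" "\<And>\<rho>. g x \<rho> < 0 \<longleftrightarrow> \<rho> < rho_bar g x"
        "\<And>\<rho>. g x \<rho> \<le> 0 \<longleftrightarrow> \<rho> \<le> rho_bar g x"
proof -
  from assms obtain a b :: ereal where cont: "continuous_on UNIV (g x)" and sm: "strict_mono (g x)"
    and la: "((\<lambda>\<rho>. ereal (g x \<rho>)) \<longlongrightarrow> a) at_bot" and lb: "((\<lambda>\<rho>. ereal (g x \<rho>)) \<longlongrightarrow> b) at_top"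
    and ab: "a < 0" "0 < b"
    unfolding scalable_classifier_def by blast
  have "eventually (\<lambda>\<rho>. ereal (g x \<rho>) < 0) at_bot" using order_tendstoD(2)[OF la ab(1)] .
  then obtain r1 where r1: "g x r1 < 0" by (auto simp: eventually_at_bot_linorder)
  have "eventually (\<lambda>\<rho>. 0 < ereal (g x \<rho>)) at_top" using order_tendstoD(1)[OF lb ab(2)] .
  then obtain r2 where r2: "0 < g x r2" by (auto simp: eventually_at_top_linorder)
  have "r1 \<le> r2"
  proof (rule ccontr)
    assume "\<not> r1 \<le> r2"
    then have "g x r2 < g x r1" using sm by (simp add: strict_mono_less)
    then show False using r1 r2 by simp
  qed
  moreover have "continuous_on {r1..r2} (g x)" using cont by (rule continuous_on_subset) simp
  ultimately obtain c where c: "g x c = 0"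
    using IVT'[of "g x" r1 0 r2] r1 r2 by (auto simp: less_imp_le)
  have uniq: "g x c' = 0 \<Longrightarrow> c' = c" for c'
    using c sm by (metis strict_mono_eq)
  have rb: "rho_bar g x = c" unfolding rho_bar_def using c uniq by (rule the_equality)
  show "g x (rho_bar g x) = 0" using rb c by simp
  show "\<And>\<rho>. g x \<rho> < 0 \<longleftrightarrow> \<rho> < rho_bar g x" using rb c sm by (metis strict_mono_less)
  show "\<And>\<rho>. g x \<rho> \<le> 0 \<longleftrightarrow> \<rho> \<le> rho_bar g x" using rb c sm by (metis strict_mono_less_eq)
qed



lemma nf_count:
  "length (filter Q (map h (neg_features n z))) = card {i\<in>{..<n}. snd (z i) = -1 \<and> Q (h (fst (z i)))}"
proof (induction n)
  case 0
  then show ?case by (simp add: neg_features_def)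
next
  case (Suc n)
  have nf: "neg_features (Suc n) z = neg_features n z @ (if snd (z n) = -1 then [fst (z n)] else [])"
    by (simp add: neg_features_def)
  let ?R = "\<lambda>i. snd (z i) = -1 \<and> Q (h (fst (z i)))"
  have s: "{i\<in>{..<Suc n}. ?R i} = (if ?R n then insert n {i\<in>{..<n}. ?R i} else {i\<in>{..<n}. ?R i})"
    by (auto simp: less_Suc_eq)
  show ?case unfolding nf s using Suc by auto
qed



theorem theorem2:
  fixes M :: "'a measure" and P :: "('a \<times> int) measure"
    and \<theta> :: "nat \<Rightarrow> 'p" and f :: "'p \<Rightarrow> 'a \<Rightarrow> real \<Rightarrow> real"
    and m nc r :: nat and \<epsilon> \<delta> :: real
  assumes "prob_space P"
    and "sets P = sets (M \<Otimes>\<^sub>M count_space UNIV)"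
    and "AE z in P. snd z \<in> {-1, 1}"
    and "inj_on \<theta> {1..m}"
    and "\<forall>k\<in>{1..m}. scalable_classifier (space M) (f (\<theta> k))"
    and "\<forall>k\<in>{1..m}. \<forall>\<rho>. (\<lambda>x. f (\<theta> k) x \<rho>) \<in> borel_measurable M"
    and "0 < \<epsilon>" "\<epsilon> < 1" "0 < \<delta>" "\<delta> < 1"
    and "1 \<le> r" "r \<le> nc"
  shows "\<forall>k\<in>{1..m}.
     measure (PiM {..<nc} (\<lambda>_. P))
       {z \<in> space (PiM {..<nc} (\<lambda>_. P)).
          measure P {(x, y) \<in> space P. y = -1 \<and> x \<in> S_eps (space M) (f (\<theta> k)) r nc z} \<le> \<epsilon>}
     \<ge> 1 - real m * binom_cdf (r - 1) nc \<epsilon>"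
proof
  fix k assume k: "k \<in> {1..m}"
  obtain g where g: "g = f (\<theta> k)" by blast
  define X where "X = space M"
  have sc: "scalable_classifier X g" using assms(5) k g X_def by simp
  have gm[measurable]: "(\<lambda>x. g x \<rho>) \<in> borel_measurable M" for \<rho> using assms(6) k g by simp
  interpret P: prob_space P by (rule assms(1))
  let ?PM = "PiM {..<nc} (\<lambda>_. P)"
  interpret PM: prob_space ?PM by (rule prob_space_PiM) (rule assms(1))
  have spP: "space P = X \<times> UNIV"
    using sets_eq_imp_space_eq[OF assms(2)] by (simp add: space_pair_measure X_def)
  have setsI: "{(x, y) \<in> space P. y = -1 \<and> x \<in> A} \<in> sets P" if "A \<in> sets M" for A
  proof -
    have "{(x, y) \<in> space P. y = -1 \<and> x \<in> A} = A \<times> {-1}"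
      using spP sets.sets_into_space[OF that] X_def by auto
    also have "\<dots> \<in> sets P" unfolding assms(2) by (rule pair_measureI) (auto simp: that)
    finally show ?thesis .
  qed
  let ?rb = "rho_bar g"
  have rbl: "g x \<rho> < 0 \<longleftrightarrow> \<rho> < ?rb x" if "x \<in> X" for x \<rho> using rb_props(2)[OF sc that] .
  have rble: "g x \<rho> \<le> 0 \<longleftrightarrow> \<rho> \<le> ?rb x" if "x \<in> X" for x \<rho> using rb_props(3)[OF sc that] .
  define D where "D \<rho> = {(x, y) \<in> space P. y = -1 \<and> x \<in> {x \<in> X. g x \<rho> < 0}}" for \<rho>
  define D0 where "D0 = {(x, y) \<in> space P. y = -1 \<and> x \<in> X}"
  define W where "W \<rho> = measure P (D \<rho>)" for \<rho>
  define N where "N = measure P D0"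
  have Dsets: "D \<rho> \<in> sets P" for \<rho> unfolding D_def X_def by (rule setsI) measurable
  have D0sets: "D0 \<in> sets P" unfolding D0_def X_def by (rule setsI) simp
  have Dsub: "D \<rho>2 \<subseteq> D \<rho>1" if "\<rho>1 \<le> \<rho>2" for \<rho>1 \<rho>2
    using that rbl unfolding D_def by auto
  have Wanti: "W \<rho>2 \<le> W \<rho>1" if "\<rho>1 \<le> \<rho>2" for \<rho>1 \<rho>2
    unfolding W_def by (rule P.finite_measure_mono[OF Dsub[OF that] Dsets])
  have WN: "W \<rho> \<le> N" for \<rho>
    unfolding W_def N_def by (rule P.finite_measure_mono[OF _ D0sets]) (auto simp: D_def D0_def)
  have Bnn: "0 \<le> binom_cdf (r - 1) nc \<epsilon>"
    unfolding binom_cdf_def using assms(7,8) by (intro sum_nonneg) auto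
  have m1: "1 \<le> m" using k by simp
  define xs where "xs z = neg_features nc (z :: nat \<Rightarrow> 'a \<times> int)" for z
  have inner: "{(x, y) \<in> space P. y = -1 \<and> x \<in> S_eps (space M) (f (\<theta> k)) r nc z}
      = (if length (xs z) < r then D0 else D (genmax r (map ?rb (xs z))))" for z
    unfolding S_eps_def g[symmetric] X_def[symmetric] xs_def D_def D0_def Let_def by simp
  have zsp: "z i \<in> space P" if "z \<in> space ?PM" "i < nc" for z i
    using that by (auto simp: space_PiM PiE_iff)
  have lenxs: "length (xs z) = card {i\<in>{..<nc}. z i \<in> D0}" if "z \<in> space ?PM" for z
  proof -
    have "length (xs z) = length (filter (\<lambda>_. True) (map id (xs z)))" by simp
    also have "\<dots> = card {i\<in>{..<nc}. snd (z i) = -1 \<and> True}" unfolding xs_def by (rule nf_count)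
    also have "{i\<in>{..<nc}. snd (z i) = -1 \<and> True} = {i\<in>{..<nc}. z i \<in> D0}"
      using zsp[OF that] spP by (auto simp: D0_def case_prod_beta mem_Times_iff)
    finally show ?thesis .
  qed
  let ?E = "{z \<in> space ?PM. measure P {(x, y) \<in> space P. y = -1 \<and> x \<in> S_eps (space M) (f (\<theta> k)) r nc z} \<le> \<epsilon>}"
  show "measure ?PM ?E \<ge> 1 - real m * binom_cdf (r - 1) nc \<epsilon>"
  proof (cases "N \<le> \<epsilon>")
    case True
    have le: "measure P {(x, y) \<in> space P. y = -1 \<and> x \<in> S_eps (space M) (f (\<theta> k)) r nc z} \<le> \<epsilon>" for z
    proof (cases "length (xs z) < r")
      case True
      then show ?thesis unfolding inner using \<open>N \<le> \<epsilon>\<close> by (simp add: N_def)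
    next
      case False
      have "W (genmax r (map ?rb (xs z))) \<le> \<epsilon>" using WN \<open>N \<le> \<epsilon>\<close> by (rule order.trans)
      then show ?thesis unfolding inner using False by (simp add: W_def)
    qed
    have "?E = space ?PM" using le by blast
    then have "measure ?PM ?E = 1" by (simp add: PM.prob_space)
    moreover have "0 \<le> real m * binom_cdf (r - 1) nc \<epsilon>" using Bnn by simp
    ultimately show ?thesis by linarith
  next
    case False
    then have Ngt: "\<epsilon> < N" by simp
    have key: "\<exists>C\<in>sets P. C \<subseteq> D0 \<and> \<epsilon> \<le> measure P C \<and>
       (\<forall>z\<in>space ?PM. length (xs z) \<ge> r \<longrightarrow>
           (W (genmax r (map ?rb (xs z))) \<le> \<epsilon> \<longleftrightarrow> r \<le> card {i\<in>{..<nc}. z i \<in> C}))"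
    proof (cases "\<forall>\<rho>. W \<rho> \<le> \<epsilon>")
      case True
      have "\<forall>z\<in>space ?PM. length (xs z) \<ge> r \<longrightarrow>
           (W (genmax r (map ?rb (xs z))) \<le> \<epsilon> \<longleftrightarrow> r \<le> card {i\<in>{..<nc}. z i \<in> D0})"
        using True lenxs by simp
      then show ?thesis using D0sets Ngt by (intro bexI[of _ D0]) (auto simp: N_def)
    next
      case False
      define L where "L = {\<rho>. \<epsilon> < W \<rho>}"
      have Lne: "L \<noteq> {}" using False by (auto simp: L_def not_le)
      have memD: "p \<in> D \<rho> \<longleftrightarrow> p \<in> space P \<and> snd p = -1 \<and> fst p \<in> X \<and> \<rho> < ?rb (fst p)" for p \<rho>
        using rbl by (cases p) (auto simp: D_def)
      have Lbdd: "bdd_above L"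
      proof (rule ccontr)
        assume nb: "\<not> bdd_above L"
        have Wn: "\<epsilon> \<le> W (real n)" for n
        proof -
          from nb obtain l where l: "l \<in> L" "\<not> l \<le> real n" unfolding bdd_above_def by blast
          then have "W l \<le> W (real n)" by (intro Wanti) simp
          then show ?thesis using l by (simp add: L_def)
        qed
        have dec: "decseq (\<lambda>n. D (real n))" unfolding decseq_def by (auto intro!: Dsub)
        have lim: "(\<lambda>n. W (real n)) \<longlonglongrightarrow> measure P (\<Inter>n. D (real n))"
          unfolding W_def by (rule P.finite_Lim_measure_decseq) (use Dsets dec in auto)
        have emp: "(\<Inter>n. D (real n)) = {}"
        proof (rule equals0I)
          fix p assume "p \<in> (\<Inter>n. D (real n))"
          then have "p \<in> D (real n)" for n by blast
          then have "real n < ?rb (fst p)" for n using memD by simp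
          moreover obtain n where "?rb (fst p) < real n" using reals_Archimedean2 by blast
          ultimately show False using less_asym by blast
        qed
        have "\<epsilon> \<le> measure P (\<Inter>n. D (real n))" by (rule LIMSEQ_le_const[OF lim]) (use Wn in blast)
        then have "\<epsilon> \<le> 0" unfolding emp by simp
        then show False using assms(7) by simp
      qed
      define \<tau> where "\<tau> = Sup L"
      have below: "\<epsilon> < W \<rho>" if "\<rho> < \<tau>" for \<rho>
      proof -
        have "\<exists>l\<in>L. \<rho> < l" using that less_cSup_iff[OF Lne Lbdd, of \<rho>] \<tau>_def by simp
        then obtain l where l: "l \<in> L" "\<rho> < l" by blast
        then have "W l \<le> W \<rho>" by (intro Wanti) simp
        then show ?thesis using l by (simp add: L_def)
      qed
      have above: "W \<rho> \<le> \<epsilon>" if "\<tau> < \<rho>" for \<rho>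
      proof (rule ccontr)
        assume "\<not> W \<rho> \<le> \<epsilon>"
        then have "\<rho> \<in> L" by (simp add: L_def)
        then have "\<rho> \<le> \<tau>" unfolding \<tau>_def by (rule cSup_upper[OF _ Lbdd])
        then show False using that by simp
      qed
      have invmono: "inverse (real (Suc m)) \<le> inverse (real (Suc n))" if "n \<le> m" for n m
        using that by (simp add: le_imp_inverse_le)
      have Wtau: "W \<tau> \<le> \<epsilon>"
      proof -
        have inc: "incseq (\<lambda>n. D (\<tau> + inverse (real (Suc n))))"
          unfolding incseq_def by (auto intro!: Dsub invmono)
        have lim: "(\<lambda>n. W (\<tau> + inverse (real (Suc n)))) \<longlonglongrightarrow> measure P (\<Union>n. D (\<tau> + inverse (real (Suc n))))"
          unfolding W_def by (rule P.finite_Lim_measure_incseq) (use Dsets inc in auto)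
        have un: "(\<Union>n. D (\<tau> + inverse (real (Suc n)))) = D \<tau>"
        proof (intro set_eqI iffI)
          fix p assume "p \<in> (\<Union>n. D (\<tau> + inverse (real (Suc n))))"
          then obtain n where "p \<in> D (\<tau> + inverse (real (Suc n)))" by blast
          then show "p \<in> D \<tau>" using Dsub[of \<tau> "\<tau> + inverse (real (Suc n))"] by auto
        next
          fix p assume p: "p \<in> D \<tau>"
          then have "0 < ?rb (fst p) - \<tau>" using memD by simp
          then obtain n where "inverse (real (Suc n)) < ?rb (fst p) - \<tau>"
            using reals_Archimedean by blast
          then have "p \<in> D (\<tau> + inverse (real (Suc n)))" using p memD by auto
          then show "p \<in> (\<Union>n. D (\<tau> + inverse (real (Suc n))))" by blast
        qed
        have "W (\<tau> + inverse (real (Suc n))) \<le> \<epsilon>" for n by (rule above) simp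
        then have "measure P (\<Union>n. D (\<tau> + inverse (real (Suc n)))) \<le> \<epsilon>"
          by (intro LIMSEQ_le_const2[OF lim]) blast
        then show ?thesis unfolding un W_def .
      qed
      have Wiff: "W \<rho> \<le> \<epsilon> \<longleftrightarrow> \<tau> \<le> \<rho>" for \<rho>
        using below above Wtau by (metis linorder_not_le order_le_less)
      define C where "C = {(x, y) \<in> space P. y = -1 \<and> x \<in> {x \<in> X. g x \<tau> \<le> 0}}"
      have Csets: "C \<in> sets P" unfolding C_def X_def by (rule setsI) measurable
      have memC: "p \<in> C \<longleftrightarrow> p \<in> space P \<and> snd p = -1 \<and> fst p \<in> X \<and> \<tau> \<le> ?rb (fst p)" for p
        using rble by (cases p) (auto simp: C_def)
      have CD0: "C \<subseteq> D0" unfolding C_def D0_def by auto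
      have mC: "\<epsilon> \<le> measure P C"
      proof -
        have dec: "decseq (\<lambda>n. D (\<tau> - inverse (real (Suc n))))"
          unfolding decseq_def by (auto intro!: Dsub invmono)
        have lim: "(\<lambda>n. W (\<tau> - inverse (real (Suc n)))) \<longlonglongrightarrow> measure P (\<Inter>n. D (\<tau> - inverse (real (Suc n))))"
          unfolding W_def by (rule P.finite_Lim_measure_decseq) (use Dsets dec in auto)
        have int: "(\<Inter>n. D (\<tau> - inverse (real (Suc n)))) = C"
        proof (intro set_eqI iffI)
          fix p assume p: "p \<in> (\<Inter>n. D (\<tau> - inverse (real (Suc n))))"
          then have "p \<in> D (\<tau> - inverse (real (Suc n)))" for n by blast
          then have pn: "\<tau> - inverse (real (Suc n)) < ?rb (fst p)" for n using memD by simp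
          have "\<tau> \<le> ?rb (fst p)"
          proof (rule ccontr)
            assume "\<not> \<tau> \<le> ?rb (fst p)"
            then have "0 < \<tau> - ?rb (fst p)" by simp
            then obtain n where "inverse (real (Suc n)) < \<tau> - ?rb (fst p)"
              using reals_Archimedean by blast
            then show False using pn[of n] by simp
          qed
          then show "p \<in> C" using p memD memC by blast
        next
          fix p assume p: "p \<in> C"
          have "p \<in> D (\<tau> - inverse (real (Suc n)))" for n
          proof -
            have "0 < inverse (real (Suc n))" by simp
            then show ?thesis using p memC memD by (smt (verit))
          qed
          then show "p \<in> (\<Inter>n. D (\<tau> - inverse (real (Suc n))))" by blast
        qed
        have "\<epsilon> \<le> W (\<tau> - inverse (real (Suc n)))" for n
          using below[of "\<tau> - inverse (real (Suc n))"] by simp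
        then have "\<epsilon> \<le> measure P (\<Inter>n. D (\<tau> - inverse (real (Suc n))))"
          by (intro LIMSEQ_le_const[OF lim]) blast
        then show ?thesis unfolding int .
      qed
      have "\<forall>z\<in>space ?PM. length (xs z) \<ge> r \<longrightarrow>
           (W (genmax r (map ?rb (xs z))) \<le> \<epsilon> \<longleftrightarrow> r \<le> card {i\<in>{..<nc}. z i \<in> C})"
      proof (intro ballI impI)
        fix z assume z: "z \<in> space ?PM" and lr: "r \<le> length (xs z)"
        have "W (genmax r (map ?rb (xs z))) \<le> \<epsilon> \<longleftrightarrow> \<tau> \<le> genmax r (map ?rb (xs z))" by (rule Wiff)
        also have "\<dots> \<longleftrightarrow> r \<le> length (filter (\<lambda>v. \<tau> \<le> v) (map ?rb (xs z)))"
          by (rule genmax_ge) (use assms(11) lr in auto)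
        also have "length (filter (\<lambda>v. \<tau> \<le> v) (map ?rb (xs z))) =
            card {i\<in>{..<nc}. snd (z i) = -1 \<and> \<tau> \<le> ?rb (fst (z i))}"
          unfolding xs_def by (rule nf_count)
        also have "{i\<in>{..<nc}. snd (z i) = -1 \<and> \<tau> \<le> ?rb (fst (z i))} = {i\<in>{..<nc}. z i \<in> C}"
          using zsp[OF z] spP memC by (auto simp: mem_Times_iff)
        finally show "W (genmax r (map ?rb (xs z))) \<le> \<epsilon> \<longleftrightarrow> r \<le> card {i\<in>{..<nc}. z i \<in> C}" .
      qed
      then show ?thesis using Csets CD0 mC by blast
    qed
    then obtain C where C: "C \<in> sets P" "C \<subseteq> D0" "\<epsilon> \<le> measure P C"
      and Ck: "\<And>z. z \<in> space ?PM \<Longrightarrow> length (xs z) \<ge> r \<Longrightarrow>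
           (W (genmax r (map ?rb (xs z))) \<le> \<epsilon> \<longleftrightarrow> r \<le> card {i\<in>{..<nc}. z i \<in> C})"
      by blast
    let ?G = "{z \<in> space ?PM. card {i\<in>{..<nc}. z i \<in> C} \<le> r - 1}"
    have EG: "?E = space ?PM - ?G"
    proof (rule set_eqI)
      fix z
      show "z \<in> ?E \<longleftrightarrow> z \<in> space ?PM - ?G"
      proof (cases "z \<in> space ?PM")
        case True
        show ?thesis
        proof (cases "length (xs z) < r")
          case True
          have "card {i\<in>{..<nc}. z i \<in> C} \<le> card {i\<in>{..<nc}. z i \<in> D0}"
            by (rule card_mono) (use C(2) in auto)
          then have "card {i\<in>{..<nc}. z i \<in> C} \<le> r - 1" using lenxs[OF \<open>z \<in> space ?PM\<close>] True by simp
          then show ?thesis using inner[of z] True Ngt by (simp add: N_def)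
        next
          case False
          then have "r \<le> length (xs z)" by simp
          have iz: "measure P {(x, y) \<in> space P. y = -1 \<and> x \<in> S_eps (space M) (f (\<theta> k)) r nc z}
             = W (genmax r (map ?rb (xs z)))" unfolding inner using False by (simp add: W_def)
          have "r \<le> card {i\<in>{..<nc}. z i \<in> C} \<longleftrightarrow> \<not> card {i\<in>{..<nc}. z i \<in> C} \<le> r - 1"
            using assms(11) by linarith
          then show ?thesis using iz Ck[OF \<open>z \<in> space ?PM\<close> \<open>r \<le> length (xs z)\<close>] \<open>z \<in> space ?PM\<close>
            by simp
        qed
      qed simp
    qed
    have cm: "?G \<in> sets ?PM \<and> measure ?PM ?G = binom_cdf (r - 1) nc (measure P C)"
      by (rule count_measure[OF assms(1) C(1)])
    have "measure ?PM ?E = 1 - binom_cdf (r - 1) nc (measure P C)"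
    proof -
      have "measure ?PM (space ?PM - ?G) = 1 - measure ?PM ?G"
        by (rule PM.prob_compl) (use cm in blast)
      then show ?thesis unfolding EG using cm by linarith
    qed
    moreover have "binom_cdf (r - 1) nc (measure P C) \<le> binom_cdf (r - 1) nc \<epsilon>"
      by (rule binom_cdf_mono) (use C(3) assms(7) in auto)
    moreover have "binom_cdf (r - 1) nc \<epsilon> \<le> real m * binom_cdf (r - 1) nc \<epsilon>"
      using mult_right_mono[of 1 "real m" "binom_cdf (r - 1) nc \<epsilon>"] m1 Bnn by simp
    ultimately show ?thesis by linarith
  qed
qed

end
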